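(* Let $\lambda(z)=z+\sum_{n\ge1}c_nz^{-n}$ be a formal series (the weak-coupling limit of the Lax operator $\boldsymbol L=\partial+\sum_{i\ge2}u_i\partial^{-i+1}$, with $\partial\to z$), and let $z(\lambda)=\lambda+O(\lambda^{-1})$ be its formal inverse. For $n\ge1$, the negative-power part $[\lambda(z)^n]_-$ (in $z$) can be uniquely re-expanded as $[\lambda(z)^n]_-=\sum_{m\ge1}\frac{v_{nm}}{m}\lambda(z)^{-m}$; this defines constants $v_{nm}$. Write $z_i=z(\lambda_i)$. Then, as formal series in $\lambda_1^{-1},\lambda_2^{-1}$, $$-\sum_{n,m\ge1}\frac{v_{nm}}{m}\lambda_1^{-n-1}\lambda_2^{-m}=\partial_{\lambda_1}\ln\frac{z_1-z_2}{\lambda_1-\lambda_2},$$ and consequently, with $\zeta_i=\lambda_i^p$ for an integer $p\ge2$, $$\frac{d\lambda_1}{d\zeta_1}\frac{d\lambda_2}{d\zeta_2}\Bigl(\sum_{n,m\ge1}v_{nm}\lambda_1^{-n-1}\lambda_2^{-m-1}+\frac1{(\lambda_1-\lambda_2)^2}\Bigr)-\frac1{(\zeta_1-\zeta_2)^2}=\partial_{\zeta_1}\partial_{\zeta_2}\ln\frac{z_1-z_2}{\zeta_1-\zeta_2},$$ i.e. the genus-zero FZZT annulus amplitude $\langle\partial\varphi_0(\zeta_1)\partial\varphi_0(\zeta_2)\rangle_{\rm c}^{(0)}$ depends only on the uniformization map $\zeta=\lambda(z)^p$.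
   Context: Here $[f(z)]_-$ denotes the sum of the terms with negative powers of $z$ in a formal Laurent series $f(z)$. Note $(z_1-z_2)/(\lambda_1-\lambda_2)=1+O(\lambda_1^{-1}\lambda_2^{-1})$ is a formal power series in $\lambda_1^{-1},\lambda_2^{-1}$, so its logarithm is well defined; $\ln((z_1-z_2)/(\zeta_1-\zeta_2))=\ln((z_1-z_2)/(\lambda_1-\lambda_2))-\ln((\zeta_1-\zeta_2)/(\lambda_1-\lambda_2))$. In the paper the coefficients $v_{nm}$ are the genus-zero two-point functions $\langle\mathcal O_n\mathcal O_m\rangle_{\rm c}^{(0)}$, and the displayed left-hand side of the second identity is the definition of $\langle\partial\varphi_0(\zeta_1)\partial\varphi_0(\zeta_2)\rangle_{\rm c}^{(0)}$. *)

theory Defs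
  imports "HOL-Computational_Algebra.Computational_Algebra"
begin

unbundle fps_syntax
notation fls_nth (infixl \<open>$$\<close> 75)

text \<open>One-variable series: the variable of an 'a fls is w = z^(-1)
  (for lambda(z)) or u = lambda^(-1) (for z(lambda)).  Two-variable objects live in the
  field 'a fls fls of iterated Laurent series: the outer variable is t = 1/lambda1,
  the inner (coefficient) variable is s = 1/lambda2.\<close>

text \<open>lambda(z) = z + sum_{n>=1} c_n z^(-n), as a Laurent series in w = 1/z.\<close>
definition lam_ser :: "(nat \<Rightarrow> 'a::field_char_0) \<Rightarrow> 'a fls" where
  "lam_ser c = fls_X_inv + fps_to_fls (Abs_fps (\<lambda>n. if n \<ge> 1 then c n else 0))"

text \<open>a(w) = 1/lambda(1/w), a power series with a(0)=0, a'(0)=1.\<close>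
definition lam_inv_ps :: "(nat \<Rightarrow> 'a::field_char_0) \<Rightarrow> 'a fps" where
  "lam_inv_ps c = fls_regpart (inverse (lam_ser c))"

text \<open>Formal inverse z(lambda) = 1 / b(1/lambda), where b is the compositional inverse of a;
  as a Laurent series in u = 1/lambda.\<close>
definition z_ser :: "(nat \<Rightarrow> 'a::field_char_0) \<Rightarrow> 'a fls" where
  "z_ser c = inverse (fps_to_fls (fps_inv (lam_inv_ps c)))"

text \<open>[lambda(z)^n]_- : the part of lambda(z)^n with negative powers of z, i.e. positive
  powers of w, as a power series in w.\<close>
definition neg_part :: "(nat \<Rightarrow> 'a::field_char_0) \<Rightarrow> nat \<Rightarrow> 'a fps" where
  "neg_part c n = Abs_fps (\<lambda>k. if k \<ge> 1 then (lam_ser c ^ n) $$ int k else 0)"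

text \<open>v_{nm}: the unique G = sum_{m>=1} (v_{nm}/m) X^m with [lambda^n]_- = G(lambda^(-1)).\<close>
definition vcoef :: "(nat \<Rightarrow> 'a::field_char_0) \<Rightarrow> nat \<Rightarrow> nat \<Rightarrow> 'a" where
  "vcoef c n m = of_nat m *
     (THE G. G $ 0 = 0 \<and> G oo lam_inv_ps c = neg_part c n) $ m"

text \<open>Embedding of a series in the outer variable (lambda1) and the inner one (lambda2).\<close>
definition outer :: "'a::field fls \<Rightarrow> 'a fls fls" where
  "outer f = Abs_fls (\<lambda>n. fls_const (f $$ n))"

definition inner :: "'a::field fls \<Rightarrow> 'a fls fls" where
  "inner f = fls_const f"

text \<open>Partial derivatives with respect to t and s, and with respect to lambda1, lambda2
  (d/dlambda = - t^2 d/dt).\<close>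
definition deriv_t :: "'a::field fls fls \<Rightarrow> 'a fls fls" where
  "deriv_t F = fls_deriv F"

definition deriv_s :: "'a::field fls fls \<Rightarrow> 'a fls fls" where
  "deriv_s F = Abs_fls (\<lambda>n. fls_deriv (F $$ n))"

definition d_lam1 :: "'a::field fls fls \<Rightarrow> 'a fls fls" where
  "d_lam1 F = - (fls_X ^ 2) * deriv_t F"

definition d_lam2 :: "'a::field fls fls \<Rightarrow> 'a fls fls" where
  "d_lam2 F = - (inner fls_X ^ 2) * deriv_s F"

definition lam1 :: "'a::field fls fls" where "lam1 = fls_X_inv"
definition lam2 :: "'a::field fls fls" where "lam2 = inner fls_X_inv"

text \<open>sum_{n,m>=1} (v_{nm}/m) lambda1^(-n-1) lambda2^(-m).\<close>
definition S1 :: "(nat \<Rightarrow> 'a::field_char_0) \<Rightarrow> 'a fls fls" where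
  "S1 c = fps_to_fls (Abs_fps (\<lambda>k. if k \<ge> 2 then
      fps_to_fls (Abs_fps (\<lambda>m. if m \<ge> 1 then vcoef c (k - 1) m / of_nat m else 0))
    else 0))"

text \<open>sum_{n,m>=1} v_{nm} lambda1^(-n-1) lambda2^(-m-1).\<close>
definition S2 :: "(nat \<Rightarrow> 'a::field_char_0) \<Rightarrow> 'a fls fls" where
  "S2 c = fps_to_fls (Abs_fps (\<lambda>k. if k \<ge> 2 then
      fps_to_fls (Abs_fps (\<lambda>m. if m \<ge> 2 then vcoef c (k - 1) (m - 1) else 0))
    else 0))"

end

theory Submission
  imports Defs
begin

lemma fls_times_nth_gen:
  fixes f g :: "'a::field fls"
  assumes "\<And>i. i < L \<Longrightarrow> f $$ i = 0" "\<And>i. i < M \<Longrightarrow> g $$ i = 0"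
  shows "(f * g) $$ n = (\<Sum>i=L..n-M. f $$ i * g $$ (n - i))"
proof (cases "f = 0 \<or> g = 0")
  case True then show ?thesis by auto
next
  case False
  then have L: "L \<le> fls_subdegree f" and M: "M \<le> fls_subdegree g"
    using assms by (auto intro: fls_subdegree_geI)
  have "(f * g) $$ n = (\<Sum>i=fls_subdegree f..n - fls_subdegree g. f $$ i * g $$ (n - i))"
    by (rule fls_times_nth(2))
  also have "\<dots> = (\<Sum>i=L..n-M. f $$ i * g $$ (n - i))"
  proof (rule sum.mono_neutral_left)
    show "finite {L..n-M}" by simp
    show "{fls_subdegree f..n - fls_subdegree g} \<subseteq> {L..n - M}" using L M by auto
    show "\<forall>i\<in>{L..n - M} - {fls_subdegree f..n - fls_subdegree g}. f $$ i * g $$ (n - i) = 0"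
      by auto
  qed
  finally show ?thesis .
qed

definition fmap :: "('a::zero \<Rightarrow> 'b::zero) \<Rightarrow> 'a fls \<Rightarrow> 'b fls" where
  "fmap \<phi> f = Abs_fls (\<lambda>n. \<phi> (f $$ n))"

lemma fmap_nth [simp]: "\<phi> 0 = 0 \<Longrightarrow> fmap \<phi> f $$ n = \<phi> (f $$ n)"
  unfolding fmap_def
  by (rule nth_Abs_fls_ex_lower_bound) (auto intro!: exI[of _ "fls_subdegree f"])

lemma fmap_below: "\<phi> 0 = 0 \<Longrightarrow> i < fls_subdegree f \<Longrightarrow> fmap \<phi> f $$ i = 0"
  by simp

lemma fmap_add:
  assumes "\<phi> 0 = 0" "\<And>x y. \<phi> (x + y) = \<phi> x + \<phi> y"
  shows "fmap \<phi> (f + g) = fmap \<phi> f + fmap \<phi> g"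
  by (rule fls_eqI) (simp add: assms)

lemma fmap_mult:
  fixes \<phi> :: "'a::field \<Rightarrow> 'b::field"
  assumes "\<phi> 0 = 0" "\<And>x y. \<phi> (x + y) = \<phi> x + \<phi> y" "\<And>x y. \<phi> (x * y) = \<phi> x * \<phi> y"
  shows "fmap \<phi> (f * g) = fmap \<phi> f * fmap \<phi> g"
proof (rule fls_eqI)
  fix n
  have hs: "\<phi> (sum h A) = sum (\<lambda>i. \<phi> (h i)) A" for h :: "int \<Rightarrow> 'a" and A
    by (induction A rule: infinite_finite_induct) (auto simp: assms)
  have "fmap \<phi> (f * g) $$ n = \<phi> ((f * g) $$ n)" using assms by simp
  also have "\<dots> = \<phi> (\<Sum>i=fls_subdegree f..n-fls_subdegree g. f $$ i * g $$ (n - i))"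
    by (simp add: fls_times_nth(2))
  also have "\<dots> = (\<Sum>i=fls_subdegree f..n-fls_subdegree g. fmap \<phi> f $$ i * fmap \<phi> g $$ (n - i))"
    by (simp add: hs assms)
  also have "\<dots> = (fmap \<phi> f * fmap \<phi> g) $$ n"
    by (rule fls_times_nth_gen[symmetric]) (auto simp: assms)
  finally show "fmap \<phi> (f * g) $$ n = (fmap \<phi> f * fmap \<phi> g) $$ n" .
qed

lemma fmap_one: "\<phi> 0 = 0 \<Longrightarrow> \<phi> 1 = 1 \<Longrightarrow> fmap \<phi> 1 = 1"
  by (rule fls_eqI) (simp add: fls_one_nth)



definition is_der :: "('b::field \<Rightarrow> 'b) \<Rightarrow> bool" where
  "is_der D \<longleftrightarrow> (\<forall>x y. D (x + y) = D x + D y) \<and> (\<forall>x y. D (x * y) = D x * y + x * D y)"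

context
  fixes D :: "'b::field \<Rightarrow> 'b"
  assumes D: "is_der D"
begin

lemma der_add: "D (x + y) = D x + D y" using D by (simp add: is_der_def)
lemma der_mult: "D (x * y) = D x * y + x * D y" using D by (simp add: is_der_def)
lemma der_0: "D 0 = 0" using der_mult[of 0 0] by simp
lemma der_1: "D 1 = 0"
proof -
  have "D 1 = D 1 + D 1" using der_mult[of 1 1] by simp
  then show ?thesis by (simp only: add_cancel_right_right)
qed
lemma der_uminus: "D (- x) = - D x"
  using der_add[of x "-x"] der_0 by (simp add: eq_neg_iff_add_eq_0 add.commute)
lemma der_diff: "D (x - y) = D x - D y"
  using der_add[of x "-y"] der_uminus[of y] by simp
lemma der_inverse: "D (inverse y) = - D y / y ^ 2"
proof (cases "y = 0")
  case True then show ?thesis by (simp add: der_0)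
next
  case False
  have "0 = D (y * inverse y)" using False by (simp add: der_1)
  also have "\<dots> = D y * inverse y + y * D (inverse y)" by (rule der_mult)
  finally have 1: "y * D (inverse y) = - (D y * inverse y)"
    by (simp add: eq_neg_iff_add_eq_0 add.commute)
  have "D (inverse y) = (y * D (inverse y)) / y" using False by simp
  also have "\<dots> = - D y / y ^ 2" unfolding 1 by (simp add: power2_eq_square divide_inverse)
  finally show ?thesis .
qed
lemma der_divide: "D (x / y) = (D x * y - x * D y) / y ^ 2"
proof (cases "y = 0")
  case True then show ?thesis by (simp add: der_0)
next
  case False
  have "D (x / y) = D x * inverse y + x * (- D y / y ^ 2)"
    unfolding divide_inverse[of x y] der_mult der_inverse ..
  also have "\<dots> = (D x * y - x * D y) / y ^ 2" using False
    by (simp add: divide_simps power2_eq_square)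
  finally show ?thesis .
qed
lemma der_logmult: "y \<noteq> 0 \<Longrightarrow> z \<noteq> 0 \<Longrightarrow> D (y * z) / (y * z) = D y / y + D z / z"
  unfolding der_mult by (simp add: add_divide_distrib)
lemma der_logdiv: "y \<noteq> 0 \<Longrightarrow> z \<noteq> 0 \<Longrightarrow> D (y / z) / (y / z) = D y / y - D z / z"
proof -
  assume yz: "y \<noteq> 0" "z \<noteq> 0"
  have "D (y / z * z) / (y / z * z) = D (y / z) / (y / z) + D z / z"
    by (rule der_logmult) (use yz in auto)
  then show ?thesis using yz by simp
qed
lemma der_power_Suc: "D (x ^ Suc n) = of_nat (Suc n) * x ^ n * D x"
proof (induction n)
  case 0 then show ?case by simp
next
  case (Suc n)
  have "D (x ^ Suc (Suc n)) = D x * x ^ Suc n + x * D (x ^ Suc n)"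
    by (metis der_mult power_Suc)
  also have "\<dots> = D x * x ^ Suc n + x * (of_nat (Suc n) * x ^ n * D x)" by (simp only: Suc)
  also have "\<dots> = of_nat (Suc (Suc n)) * x ^ Suc n * D x"
    by (simp add: algebra_simps)
  finally show ?case .
qed
lemma der_power: "D (x ^ n) = of_nat n * x ^ (n - 1) * D x"
  by (cases n) (simp add: der_1, simp only: der_power_Suc diff_Suc_1)
lemma der_of_nat: "D (of_nat n) = 0"
  by (induction n) (simp_all add: der_0 der_add der_1)
end

lemma is_der_scale:
  assumes D: "is_der D" shows "is_der (\<lambda>x. c * D x)"
  unfolding is_der_def
proof (intro conjI allI)
  fix x y
  show "c * D (x + y) = c * D x + c * D y" by (simp add: der_add[OF D] distrib_left)
  show "c * D (x * y) = c * D x * y + x * (c * D y)" by (simp add: der_mult[OF D] algebra_simps)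
qed

lemma der_comm_logder:
  assumes D1: "is_der D1" and D2: "is_der D2" and comm: "\<And>x. D1 (D2 x) = D2 (D1 x)"
  shows "D1 (D2 F / F) = D2 (D1 F / F)"
proof -
  have 1: "D1 (D2 F / F) = (D1 (D2 F) * F - D2 F * D1 F) / F^2" by (rule der_divide[OF D1])
  have 2: "D2 (D1 F / F) = (D2 (D1 F) * F - D1 F * D2 F) / F^2" by (rule der_divide[OF D2])
  show ?thesis unfolding 1 2 comm by (simp only: mult.commute)
qed


definition fhom :: "('a::field \<Rightarrow> 'b::field) \<Rightarrow> bool" where
  "fhom \<phi> \<longleftrightarrow> \<phi> 1 = 1 \<and> (\<forall>x y. \<phi> (x + y) = \<phi> x + \<phi> y) \<and> (\<forall>x y. \<phi> (x * y) = \<phi> x * \<phi> y)"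

context
  fixes \<phi> :: "'a::field \<Rightarrow> 'b::field"
  assumes H: "fhom \<phi>"
begin
lemma fhom_1: "\<phi> 1 = 1" using H by (simp add: fhom_def)
lemma fhom_add: "\<phi> (x + y) = \<phi> x + \<phi> y" using H by (simp add: fhom_def)
lemma fhom_mult: "\<phi> (x * y) = \<phi> x * \<phi> y" using H by (simp add: fhom_def)
lemma fhom_0: "\<phi> 0 = 0"
proof -
  have "\<phi> 0 = \<phi> 0 + \<phi> 0" using fhom_add[of 0 0] by simp
  then show ?thesis by (simp only: add_cancel_right_right)
qed
lemma fhom_uminus: "\<phi> (- x) = - \<phi> x"
  using fhom_add[of x "-x"] fhom_0 by (simp add: eq_neg_iff_add_eq_0 add.commute)
lemma fhom_diff: "\<phi> (x - y) = \<phi> x - \<phi> y"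
  using fhom_add[of x "-y"] fhom_uminus[of y] by simp
lemma fhom_inverse: "\<phi> (inverse x) = inverse (\<phi> x)"
proof (cases "x = 0")
  case True then show ?thesis by (simp add: fhom_0)
next
  case False
  have "\<phi> x * \<phi> (inverse x) = 1" using False by (simp flip: fhom_mult add: fhom_1)
  then show ?thesis using inverse_unique by metis
qed
lemma fhom_divide: "\<phi> (x / y) = \<phi> x / \<phi> y"
  by (simp add: divide_inverse fhom_mult fhom_inverse)
lemma fhom_power: "\<phi> (x ^ n) = \<phi> x ^ n"
  by (induction n) (simp_all add: fhom_1 fhom_mult)
lemma fhom_of_nat: "\<phi> (of_nat n) = of_nat n"
  by (induction n) (simp_all add: fhom_0 fhom_1 fhom_add)
lemma fhom_of_int: "\<phi> (of_int k) = of_int k"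
  by (cases k rule: int_cases4) (simp_all add: fhom_of_nat fhom_uminus)
lemma fhom_inj: "\<phi> x = 0 \<longleftrightarrow> x = 0"
proof
  assume "\<phi> x = 0"
  show "x = 0"
  proof (rule ccontr)
    assume "x \<noteq> 0"
    then have "\<phi> x * \<phi> (inverse x) = 1" by (simp flip: fhom_mult add: fhom_1)
    with \<open>\<phi> x = 0\<close> show False by simp
  qed
qed (simp add: fhom_0)

lemma fhom_fmap: "fhom (fmap \<phi>)"
  unfolding fhom_def
  using fmap_one[of \<phi>] fmap_add[of \<phi>] fmap_mult[of \<phi>] by (simp add: fhom_0 fhom_1 fhom_add fhom_mult)

lemma fmap_nth': "fmap \<phi> f $$ n = \<phi> (f $$ n)" by (simp add: fhom_0)

lemma fmap_deriv: "fmap \<phi> (fls_deriv f) = fls_deriv (fmap \<phi> f)"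
  by (rule fls_eqI) (simp add: fmap_nth' fhom_mult fhom_of_int fhom_add fhom_1)

lemma fmap_X: "fmap \<phi> fls_X = fls_X"
  by (rule fls_eqI) (simp add: fmap_nth' fhom_0 fhom_1)
lemma fmap_X_inv: "fmap \<phi> fls_X_inv = fls_X_inv"
  by (rule fls_eqI) (simp add: fmap_nth' fhom_0 fhom_1)
lemma fmap_const: "fmap \<phi> (fls_const c) = fls_const (\<phi> c)"
  by (rule fls_eqI) (simp add: fmap_nth' fhom_0)
end

lemma fhom_fls_const: "fhom fls_const"
  by (simp add: fhom_def fls_plus_const)

lemma fhom_outer: "fhom (outer :: 'a::field fls \<Rightarrow> 'a fls fls)"
  unfolding outer_def fmap_def[symmetric] by (rule fhom_fmap[OF fhom_fls_const])

lemma outer_eq: "outer = fmap fls_const" by (rule ext) (simp add: outer_def fmap_def)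

lemma fhom_inner: "fhom (inner :: 'a::field fls \<Rightarrow> 'a fls fls)"
  unfolding inner_def[abs_def] by (rule fhom_fls_const)

lemma is_der_deriv_t: "is_der (deriv_t :: 'a::field fls fls \<Rightarrow> _)"
  unfolding is_der_def deriv_t_def by (simp add: algebra_simps)

lemma deriv_s_eq: "deriv_s = fmap fls_deriv"
  by (rule ext) (simp add: deriv_s_def fmap_def)

lemma deriv_s_nth [simp]: "deriv_s F $$ n = fls_deriv (F $$ n)"
  by (simp add: deriv_s_eq)

lemma is_der_deriv_s: "is_der (deriv_s :: 'a::field fls fls \<Rightarrow> _)"
  unfolding is_der_def
proof (intro conjI allI)
  fix x y :: "'a fls fls"
  show "deriv_s (x + y) = deriv_s x + deriv_s y" by (rule fls_eqI) simp
  show "deriv_s (x * y) = deriv_s x * y + x * deriv_s y"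
  proof (rule fls_eqI)
    fix n
    let ?L = "fls_subdegree x" and ?M = "fls_subdegree y"
    have "deriv_s (x * y) $$ n = fls_deriv (\<Sum>i=?L..n-?M. x $$ i * y $$ (n - i))"
      by (simp add: fls_times_nth(2))
    also have "\<dots> = (\<Sum>i=?L..n-?M. deriv_s x $$ i * y $$ (n - i)) + (\<Sum>i=?L..n-?M. x $$ i * deriv_s y $$ (n - i))"
      by (simp add: fls_deriv_sum sum.distrib algebra_simps)
    also have "\<dots> = (deriv_s x * y) $$ n + (x * deriv_s y) $$ n"
      by (subst (1 2) fls_times_nth_gen[where L = ?L and M = ?M]) auto
    finally show "deriv_s (x * y) $$ n = (deriv_s x * y + x * deriv_s y) $$ n" by simp
  qed
qed

lemma d_lam1_eq: "d_lam1 = (\<lambda>F. (- (fls_X ^ 2)) * deriv_t F)"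
  by (rule ext) (simp add: d_lam1_def)
lemma d_lam2_eq: "d_lam2 = (\<lambda>F. (- (inner fls_X ^ 2)) * deriv_s F)"
  by (rule ext) (simp add: d_lam2_def)

lemma is_der_d_lam1: "is_der (d_lam1 :: 'a::field fls fls \<Rightarrow> _)"
  unfolding d_lam1_eq by (rule is_der_scale[OF is_der_deriv_t])
lemma is_der_d_lam2: "is_der (d_lam2 :: 'a::field fls fls \<Rightarrow> _)"
  unfolding d_lam2_eq by (rule is_der_scale[OF is_der_deriv_s])

lemma deriv_t_inner [simp]: "deriv_t (inner g) = 0"
  by (simp add: deriv_t_def inner_def)
lemma deriv_s_inner [simp]: "deriv_s (inner g) = inner (fls_deriv g)"
  by (rule fls_eqI) (simp add: inner_def)
lemma deriv_s_outer [simp]: "deriv_s (outer f) = 0"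
  by (rule fls_eqI) (simp add: outer_def)
lemma deriv_t_outer: "deriv_t (outer f) = outer (fls_deriv f)"
  unfolding deriv_t_def outer_eq by (rule fmap_deriv[OF fhom_fls_const, symmetric])

lemma deriv_t_s_comm: "deriv_t (deriv_s F) = deriv_s (deriv_t (F :: 'a::field fls fls))"
proof (rule fls_eqI)
  fix n
  have "fls_deriv (of_int (n + 1) * F $$ (n + 1)) = of_int (n + 1) * fls_deriv (F $$ (n + 1))"
    by (simp add: fls_deriv_mult)
  then show "deriv_t (deriv_s F) $$ n = deriv_s (deriv_t F) $$ n"
    by (simp add: deriv_t_def)
qed

lemma outer_X: "outer fls_X = fls_X"
  using fmap_X[OF fhom_fls_const] by (simp add: outer_eq)

lemma d_lam_comm: "d_lam1 (d_lam2 F) = d_lam2 (d_lam1 (F :: 'a::field fls fls))"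
proof -
  have a: "deriv_t (inner fls_X ^ 2 :: 'a fls fls) = 0"
    by (simp add: fhom_power[OF fhom_inner, symmetric])
  have b: "deriv_s (fls_X ^ 2 :: 'a fls fls) = 0"
    by (simp add: outer_X[symmetric] fhom_power[OF fhom_outer, symmetric])
  show ?thesis
    unfolding d_lam1_eq d_lam2_eq
    by (simp add: der_mult[OF is_der_deriv_t] der_mult[OF is_der_deriv_s] der_uminus[OF is_der_deriv_t]
         der_uminus[OF is_der_deriv_s] a b deriv_t_s_comm algebra_simps)
qed



lemma der_powi:
  assumes D: "is_der D" and x: "(x::'b::field) \<noteq> 0"
  shows "D (x powi m) = of_int m * x powi (m - 1) * D x"
proof (cases "m \<ge> 0")
  case True
  then obtain n where m: "m = int n" using nonneg_int_cases by blast
  show ?thesis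
  proof (cases n)
    case 0 then show ?thesis using m by (simp add: der_1[OF D])
  next
    case (Suc k)
    then have "m - 1 = int k" using m by simp
    have "D (x powi m) = D (x ^ Suc k)" using m Suc by (simp only: power_int_of_nat)
    also have "\<dots> = of_nat (Suc k) * x ^ k * D x" using der_power[OF D, of x "Suc k"] by simp
    also have "\<dots> = of_int m * x powi (m - 1) * D x"
      using m Suc \<open>m - 1 = int k\<close> by (simp only: power_int_of_nat of_int_of_nat_eq)
    finally show ?thesis .
  qed
next
  case False
  then obtain n where m: "m = - int n" and n: "n > 0"
    by (metis int_cases4 linorder_not_le nat_le_0 neg_0_le_iff_le of_nat_0_le_iff)
  have xn: "x ^ (n - 1) \<noteq> 0" using x by simp
  have e: "(x ^ n) ^ 2 = x ^ (n - 1) * x ^ Suc n"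
  proof -
    have "n - 1 + Suc n = n + n" using n by simp
    then show ?thesis by (metis power2_eq_square power_add)
  qed
  have "D (x powi m) = D (inverse (x ^ n))" using m by (simp add: power_int_minus)
  also have "\<dots> = - (of_nat n * x ^ (n - 1) * D x) / (x ^ (n - 1) * x ^ Suc n)"
    by (simp add: der_inverse[OF D] der_power[OF D] e)
  also have "\<dots> = - (of_nat n * D x) / x ^ Suc n"
    using xn by (simp add: divide_simps)
  also have "\<dots> = of_int m * x powi (m - 1) * D x"
  proof -
    have "m - 1 = - int (Suc n)" using m by simp
    then have "x powi (m - 1) = inverse (x ^ Suc n)" by (simp only: power_int_minus power_int_of_nat)
    then show ?thesis using m by (simp add: divide_inverse)
  qed
  finally show ?thesis .
qed



lemma is_der_fls_deriv: "is_der (fls_deriv :: 'a::field fls \<Rightarrow> _)"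
  unfolding is_der_def by (simp add: algebra_simps)

lemma fls_of_int_mult_nth: "(of_int j * (F :: 'a::field fls)) $$ n = of_int j * F $$ n"
  by (simp add: fls_of_int)

context
  fixes b :: "'a::field_char_0 fps"
  assumes b0: "b $ 0 = 0" and b1: "b $ 1 \<noteq> 0"
begin

lemma b_nz: "b \<noteq> 0" using b1 by auto

lemma B_nz: "fps_to_fls b \<noteq> 0" using b_nz by simp

lemma rcv_powi:
  "fls_residue (fps_to_fls b powi k * fls_deriv (fps_to_fls b)) = (if k = -1 then 1 else 0)"
proof (cases "k = -1")
  case False
  let ?B = "fps_to_fls b"
  have e: "fls_deriv (?B powi (k + 1)) = of_int (k + 1) * (?B powi k * fls_deriv ?B)"
    using der_powi[OF is_der_fls_deriv B_nz, of "k+1"] by (simp only: mult.assoc add_diff_cancel_right')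
  have "of_int (k + 1) * ((?B powi k * fls_deriv ?B) $$ (-1)) = 0"
    by (metis e fls_deriv_residue fls_of_int_mult_nth)
  moreover have "(of_int (k + 1) :: 'a) \<noteq> 0" using False by (simp only: of_int_eq_0_iff)
  ultimately show ?thesis using False by (simp del: of_int_add)
next
  case True
  define u where "u = fps_shift 1 b"
  have sd: "1 \<le> subdegree b" using b0 b_nz subdegree_pos_iff[of b] by simp
  have bu: "b = u * fps_X" unfolding u_def using fps_shift_times_fps_X[OF sd] by simp
  have u0: "u $ 0 = b $ 1" by (simp add: u_def)
  have su: "subdegree u = 0" using u0 b1 by (simp add: subdegree_eq_0_iff)
  have "fps_to_fls b powi k = inverse (fps_to_fls u * fls_X)"
    using True bu by (simp add: fls_times_fps_to_fls power_int_minus)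
  also have "\<dots> = fps_to_fls (inverse u) * fls_X_inv"
    using su by (simp add: fls_inverse_fps_to_fls fls_inverse_X)
  finally have 1: "fps_to_fls b powi k * fls_deriv (fps_to_fls b) = 
      fps_to_fls (inverse u * fps_deriv b) * fls_X_inv"
    by (simp add: fls_deriv_fps_to_fls fls_times_fps_to_fls algebra_simps)
  show ?thesis unfolding 1 using True u0 b1
    by (simp add: fls_X_inv_times_conv_shift)
qed

lemma fls_decomp:
  "(f :: 'a fls) = fps_to_fls (fls_regpart f) +
      (\<Sum>k\<in>{fls_subdegree f..-1}. fls_const (f $$ k) * fls_X powi k)"
proof (rule fls_eqI)
  fix n
  have s: "(\<Sum>k\<in>{fls_subdegree f..-1}. fls_const (f $$ k) * fls_X powi k) $$ n
      = (\<Sum>k\<in>{fls_subdegree f..-1}. if n = k then f $$ k else 0)"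
    by (simp add: fls_nth_sum if_distrib[of "\<lambda>x. _ * x"] cong: if_cong)
  show "f $$ n = (fps_to_fls (fls_regpart f) + (\<Sum>k\<in>{fls_subdegree f..-1}. fls_const (f $$ k) * fls_X powi k)) $$ n"
    unfolding fls_plus_nth s by (cases "n < fls_subdegree f") (auto simp: sum.delta)
qed

lemma compose_sum: "fls_compose_fps (sum g S) b = (\<Sum>k\<in>S. fls_compose_fps (g k) b)"
  by (induction S rule: infinite_finite_induct) (simp_all add: fls_compose_fps_add b0 b_nz)

lemma rcv: "fls_residue (fls_compose_fps f b * fls_deriv (fps_to_fls b)) = fls_residue f"
proof -
  let ?B' = "fls_deriv (fps_to_fls b)"
  let ?S = "\<Sum>k\<in>{fls_subdegree f..-1}. fls_const (f $$ k) * fls_X powi k"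
  have 1: "fls_compose_fps f b = fls_compose_fps (fps_to_fls (fls_regpart f)) b + fls_compose_fps ?S b"
    by (subst fls_decomp) (simp add: fls_compose_fps_add b0 b_nz)
  have 2: "fls_residue (fls_compose_fps (fps_to_fls (fls_regpart f)) b * ?B') = 0"
    by (simp add: b0 b_nz fls_deriv_fps_to_fls flip: fls_times_fps_to_fls)
  have 3: "fls_compose_fps (fls_const c * fls_X powi k) b = fls_const c * fps_to_fls b powi k" for c k
    using fls_compose_fps_powi[OF b_nz b0, of fls_X k]
    by (simp add: fls_compose_fps_mult b0 b_nz del: fls_X_power_int)
  have 4: "fls_residue (fls_compose_fps ?S b * ?B') = (\<Sum>k\<in>{fls_subdegree f..-1}. f $$ k * (if k = -1 then 1 else 0))"
    unfolding compose_sum 3 sum_distrib_right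
    using rcv_powi by (simp add: fls_nth_sum mult.assoc del: fls_X_power_int)
  have 5: "(\<Sum>k\<in>{fls_subdegree f..-1}. f $$ k * (if k = -1 then 1 else 0)) = f $$ -1"
    by (cases "-1 < fls_subdegree f") (auto simp: if_distrib[of "\<lambda>x. _ * x"] sum.delta' cong: if_cong)
  show ?thesis unfolding 1 distrib_right using 2 4 5 by simp
qed
end


definition gser :: "(nat \<Rightarrow> 'a::field_char_0) \<Rightarrow> 'a fps" where
  "gser c = Abs_fps (\<lambda>n. if n \<ge> 1 then c n else 0)"

lemma lam_ser_factor: "lam_ser c = fls_X_inv * fps_to_fls (1 + fps_X * gser c)"
proof (rule fls_eqI)
  fix n
  show "lam_ser c $$ n = (fls_X_inv * fps_to_fls (1 + fps_X * gser c)) $$ n"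
    unfolding lam_ser_def gser_def fls_X_inv_times_conv_shift
    by (cases "n \<ge> 0") (auto simp: fps_X_mult_nth nat_add_distrib)
qed

lemma lam_inv_ps_eq: "lam_inv_ps c = fps_X * inverse (1 + fps_X * gser c)"
proof -
  let ?u = "1 + fps_X * gser c"
  have u0: "subdegree ?u = 0" by (simp add: subdegree_eq_0_iff)
  have "inverse (lam_ser c) = inverse fls_X_inv * inverse (fps_to_fls ?u)"
    unfolding lam_ser_factor by (rule inverse_mult_distrib)
  also have "\<dots> = fps_to_fls (fps_X * inverse ?u)"
    by (simp only: fls_inverse_fps_to_fls[OF u0] fls_inverse_X_inv' inverse_1 fls_times_fps_to_fls fps_X_to_fls)
  finally have "inverse (lam_ser c) = fps_to_fls (fps_X * inverse ?u)" .
  then show ?thesis by (simp add: lam_inv_ps_def)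
qed

lemma A_eq: "fps_to_fls (lam_inv_ps c) = inverse (lam_ser c)"
proof -
  let ?u = "1 + fps_X * gser c"
  have u0: "subdegree ?u = 0" by (simp add: subdegree_eq_0_iff)
  have "inverse (lam_ser c) = inverse fls_X_inv * inverse (fps_to_fls ?u)"
    unfolding lam_ser_factor by (rule inverse_mult_distrib)
  also have "\<dots> = fps_to_fls (fps_X * inverse ?u)"
    by (simp only: fls_inverse_fps_to_fls[OF u0] fls_inverse_X_inv' inverse_1 fls_times_fps_to_fls fps_X_to_fls)
  finally have "inverse (lam_ser c) = fps_to_fls (fps_X * inverse ?u)" .
  then show ?thesis by (simp add: lam_inv_ps_eq)
qed

lemma a0: "lam_inv_ps c $ 0 = 0"
  by (simp add: lam_inv_ps_eq)
lemma a1: "lam_inv_ps c $ 1 = 1"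
  by (simp add: lam_inv_ps_eq fps_X_mult_nth)
lemma a1': "lam_inv_ps c $ Suc 0 = 1"
  using a1[of c] by simp
lemma a_nz: "lam_inv_ps c \<noteq> 0"
  using a1[of c] by auto

lemma b0: "fps_inv (lam_inv_ps c) $ 0 = 0"
  by (simp add: fps_inv_def)
lemma b1: "fps_inv (lam_inv_ps c) $ 1 = 1"
  using a1'[of c] by (simp add: fps_inv_def)
lemma b_nz': "fps_inv (lam_inv_ps c) \<noteq> 0"
  using b1[of c] by auto

lemma ab: "lam_inv_ps c oo fps_inv (lam_inv_ps c) = fps_X"
  by (rule fps_inv_right) (simp_all add: a0 a1')
lemma ba: "fps_inv (lam_inv_ps c) oo lam_inv_ps c = fps_X"
  by (rule fps_inv) (simp_all add: a0 a1')

lemma the_G: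
  "(THE G. G $ 0 = 0 \<and> G oo lam_inv_ps c = neg_part c n) = neg_part c n oo fps_inv (lam_inv_ps c)"
proof (rule the_equality)
  let ?a = "lam_inv_ps c" and ?b = "fps_inv (lam_inv_ps c)"
  show "(neg_part c n oo ?b) $ 0 = 0 \<and> (neg_part c n oo ?b) oo ?a = neg_part c n"
  proof
    show "(neg_part c n oo ?b) $ 0 = 0" by (simp add: neg_part_def)
    have "(neg_part c n oo ?b) oo ?a = neg_part c n oo (?b oo ?a)"
      by (rule fps_compose_assoc[symmetric]) (simp_all add: a0 b0)
    then show "(neg_part c n oo ?b) oo ?a = neg_part c n" by (simp add: ba)
  qed
  fix G assume G: "G $ 0 = 0 \<and> G oo ?a = neg_part c n"
  have "(neg_part c n oo ?b) oo ?a = neg_part c n oo (?b oo ?a)"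
    by (rule fps_compose_assoc[symmetric]) (simp_all add: a0 b0)
  then have "G oo ?a = (neg_part c n oo ?b) oo ?a" using G by (simp add: ba)
  then show "G = neg_part c n oo ?b"
    by (metis a0 a1 fps_compose_inj_right one_neq_zero)
qed

lemma S1_coef:
  "Abs_fps (\<lambda>m. if m \<ge> 1 then vcoef c n m / of_nat m else 0) = neg_part c n oo fps_inv (lam_inv_ps c)"
proof (rule fps_ext)
  fix m
  show "Abs_fps (\<lambda>m. if m \<ge> 1 then vcoef c n m / of_nat m else 0) $ m = (neg_part c n oo fps_inv (lam_inv_ps c)) $ m"
    unfolding vcoef_def the_G by (cases "m = 0") (simp_all add: neg_part_def)
qed



definition Dz :: "(nat \<Rightarrow> 'a::field_char_0) \<Rightarrow> 'a fls" where
  "Dz c = - (fls_X ^ 2) * fls_deriv (z_ser c)"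
definition Cm :: "(nat \<Rightarrow> 'a::field_char_0) \<Rightarrow> nat \<Rightarrow> 'a fls" where
  "Cm c m = Dz c * inverse (z_ser c ^ (m + 1))"

lemma z_nz: "z_ser c \<noteq> 0"
  using b_nz'[of c] by (simp add: z_ser_def)

lemma Cm_explicit:
  "Cm c m = fls_X powi 2 * fls_deriv (fps_to_fls (fps_inv (lam_inv_ps c))) *
             fps_to_fls (fps_inv (lam_inv_ps c)) powi (int m - 1)"
proof -
  let ?B = "fps_to_fls (fps_inv (lam_inv_ps c))"
  have Bnz: "?B \<noteq> 0" using b_nz'[of c] by simp
  have 1: "fls_deriv (z_ser c) = - fls_deriv ?B / ?B ^ 2"
    unfolding z_ser_def by (rule der_inverse[OF is_der_fls_deriv])
  have 2: "inverse (z_ser c ^ (m + 1)) = ?B ^ (m + 1)"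
    by (simp add: z_ser_def power_inverse)
  have 3: "?B ^ (m + 1) / ?B ^ 2 = ?B powi (int m - 1)"
  proof -
    have "?B powi (int m - 1) = ?B powi (int (m + 1) - int 2)" by simp
    also have "\<dots> = ?B powi int (m + 1) / ?B powi int 2" by (rule power_int_diff) (use Bnz in simp)
    finally show ?thesis by (simp only: power_int_of_nat)
  qed
  have "Cm c m = fls_X ^ 2 * fls_deriv ?B * (?B ^ (m + 1) / ?B ^ 2)"
    unfolding Cm_def Dz_def 1 2 by (simp add: divide_inverse algebra_simps)
  also have "\<dots> = fls_X powi 2 * fls_deriv ?B * ?B powi (int m - 1)"
    unfolding 3 by (simp del: fls_X_power_int)
  finally show ?thesis .
qed

lemma CL: "Cm c m $$ k = (fps_to_fls (lam_inv_ps c) powi (1 - k)) $$ (- int m)"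
proof -
  let ?a = "lam_inv_ps c"
  let ?b = "fps_inv ?a"
  let ?B = "fps_to_fls ?b" and ?A = "fps_to_fls ?a"
  have b0': "?b $ 0 = 0" by (rule b0)
  have b1': "?b $ 1 \<noteq> 0" using b1[of c] by simp
  have bnz: "?b \<noteq> 0" by (rule b_nz')
  have Xc: "fls_compose_fps ?A ?b = fls_X"
    using fls_compose_fps_to_fls[OF bnz b0', of ?a] by (simp add: ab)
  have Bc: "fls_compose_fps fls_X ?b = ?B" by simp
  have Xnz: "(fls_X :: 'a fls) \<noteq> 0" by simp
  have 1: "Cm c m $$ k = (fls_X powi (- k - 1) * Cm c m) $$ (-1)"
    by (simp only: fls_X_power_int fls_X_intpow_times_conv_shift fls_shift_nth) simp
  have 2: "fls_X powi (- k - 1) * Cm c m =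
      (fls_X powi (1 - k) * ?B powi (int m - 1)) * fls_deriv ?B"
  proof -
    have "fls_X powi (- k - 1) * fls_X powi 2 = (fls_X powi (1 - k) :: 'a fls)"
      using power_int_add[of "fls_X :: 'a fls" "- k - 1" 2] by (simp del: fls_X_power_int)
    then show ?thesis unfolding Cm_explicit
      by (simp del: fls_X_power_int add: algebra_simps)
  qed
  have 3: "fls_X powi (1 - k) * ?B powi (int m - 1) =
      fls_compose_fps (?A powi (1 - k) * fls_X powi (int m - 1)) ?b"
    by (simp only: fls_compose_fps_mult[OF bnz b0'] fls_compose_fps_powi[OF bnz b0'] Xc Bc)
  have "Cm c m $$ k = fls_residue (fls_compose_fps (?A powi (1 - k) * fls_X powi (int m - 1)) ?b * fls_deriv ?B)"
    unfolding 1 2 3 by simp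
  also have "\<dots> = fls_residue (?A powi (1 - k) * fls_X powi (int m - 1))"
    by (rule rcv[OF b0' b1'])
  also have "\<dots> = (?A powi (1 - k)) $$ (- int m)"
    by (simp only: fls_residue_def fls_X_power_int fls_X_intpow_times_conv_shift fls_shift_nth) simp
  finally show ?thesis .
qed



lemma CL_pos: "k \<ge> 1 \<Longrightarrow> Cm c m $$ k = (lam_ser c ^ nat (k - 1)) $$ (- int m)"
proof -
  assume k: "k \<ge> 1"
  have "1 - k = - int (nat (k - 1))" using k by simp
  then have "fps_to_fls (lam_inv_ps c) powi (1 - k) = inverse (fps_to_fls (lam_inv_ps c) ^ nat (k - 1))"
    by (simp only: power_int_minus power_int_of_nat)
  also have "\<dots> = lam_ser c ^ nat (k - 1)"
    by (simp add: A_eq power_inverse)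
  finally show ?thesis by (simp add: CL)
qed

lemma CL_nonpos: "k \<le> 0 \<Longrightarrow> Cm c m $$ k = 0"
proof -
  assume k: "k \<le> 0"
  have "1 - k = int (nat (1 - k))" using k by simp
  then have "fps_to_fls (lam_inv_ps c) powi (1 - k) = fps_to_fls (lam_inv_ps c ^ nat (1 - k))"
    by (metis power_int_of_nat fps_to_fls_power)
  moreover have "(lam_inv_ps c ^ nat (1 - k)) $ 0 = 0"
    using k by (simp add: fps_nth_power_0 a0)
  ultimately show ?thesis by (simp add: CL)
qed

definition slice :: "int \<Rightarrow> 'a::field fls fls \<Rightarrow> 'a fls" where
  "slice j F = Abs_fls (\<lambda>k. F $$ k $$ j)"

lemma slice_nth [simp]: "slice j F $$ k = F $$ k $$ j"
  unfolding slice_def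
  by (rule nth_Abs_fls_ex_lower_bound) (auto intro!: exI[of _ "fls_subdegree F"])

lemma slice_eqI: "(\<And>j. slice j F = slice j G) \<Longrightarrow> F = G"
proof (rule fls_eqI, rule fls_eqI)
  fix n j assume "\<And>j. slice j F = slice j G"
  then have "slice j F $$ n = slice j G $$ n" by simp
  then show "F $$ n $$ j = G $$ n $$ j" by simp
qed

lemma slice_diff: "slice j (F - G) = slice j F - slice j G"
  by (rule fls_eqI) simp

lemma outer_nth: "outer f $$ n = fls_const (f $$ n)"
  by (simp add: outer_eq)

lemma slice_outer: "slice j (outer f) = (if j = 0 then f else 0)"
  by (rule fls_eqI) (simp add: outer_nth)

lemma slice_outer_mult: "slice j (outer f * F) = f * slice j F"
proof (rule fls_eqI)
  fix k
  have "(outer f * F) $$ k = (\<Sum>i=fls_subdegree f..k - fls_subdegree F. outer f $$ i * F $$ (k - i))"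
    by (rule fls_times_nth_gen) (auto simp: outer_nth)
  then have "slice j (outer f * F) $$ k = (\<Sum>i=fls_subdegree f..k - fls_subdegree F. f $$ i * F $$ (k - i) $$ j)"
    by (simp add: outer_nth fls_nth_sum)
  also have "\<dots> = (\<Sum>i=fls_subdegree f..k - fls_subdegree F. f $$ i * slice j F $$ (k - i))"
    by simp
  also have "\<dots> = (f * slice j F) $$ k"
    by (rule fls_times_nth_gen[symmetric]) auto
  finally show "slice j (outer f * F) $$ k = (f * slice j F) $$ k" .
qed

lemma slice_Winv_mult: "slice j (inner fls_X_inv * F) = slice (j + 1) F"
  by (rule fls_eqI) (simp add: inner_def fls_X_inv_times_conv_shift)

definition Gm :: "(nat \<Rightarrow> 'a::field_char_0) \<Rightarrow> 'a fls fls" where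
  "Gm c = Abs_fls (\<lambda>k. if k \<ge> 1 then lam_ser c ^ nat (k - 1) else 0)"

lemma Gm_nth: "Gm c $$ k = (if k \<ge> 1 then lam_ser c ^ nat (k - 1) else 0)"
  unfolding Gm_def by (rule nth_Abs_fls_ex_lower_bound) (auto intro!: exI[of _ 1])

definition Nn :: "(nat \<Rightarrow> 'a::field_char_0) \<Rightarrow> 'a fls fls" where
  "Nn c = fps_to_fls (Abs_fps (\<lambda>k. if k \<ge> 2 then fps_to_fls (neg_part c (k - 1)) else 0))"

lemma Nn_nth: "Nn c $$ k $$ j = (if k \<ge> 2 \<and> j \<ge> 1 then (lam_ser c ^ nat (k - 1)) $$ j else 0)"
proof (cases "k \<ge> 2")
  case True
  then have "nat k - 1 = nat (k - 1)" by simp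
  with True show ?thesis
    by (auto simp: Nn_def neg_part_def)
qed (auto simp: Nn_def)

definition Psi :: "(nat \<Rightarrow> 'a::field_char_0) \<Rightarrow> 'a fls fls" where
  "Psi c = Gm c - Nn c"

lemma slice_Psi: "slice j (Psi c) = (if j \<le> 0 then Cm c (nat (- j)) else 0)"
proof (rule fls_eqI)
  fix k
  show "slice j (Psi c) $$ k = (if j \<le> 0 then Cm c (nat (- j)) else 0) $$ k"
  proof (cases "k \<ge> 1")
    case True
    show ?thesis
    proof (cases "j \<le> 0")
      case True
      then show ?thesis using \<open>k \<ge> 1\<close> by (simp add: Psi_def Gm_nth Nn_nth CL_pos)
    next
      case False
      then show ?thesis using \<open>k \<ge> 1\<close>
        by (cases "k = 1") (simp_all add: Psi_def Gm_nth Nn_nth)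
    qed
  next
    case False
    then show ?thesis by (simp add: Psi_def Gm_nth Nn_nth CL_nonpos)
  qed
qed



lemma Gm_inv: "(lam1 - inner (lam_ser c)) * Gm c = 1"
proof (rule fls_eqI)
  fix k
  have "((lam1 - inner (lam_ser c)) * Gm c) $$ k = Gm c $$ (k + 1) - lam_ser c * Gm c $$ k"
    by (simp add: lam1_def inner_def algebra_simps fls_X_inv_times_conv_shift)
  also have "\<dots> = (1 :: 'a fls fls) $$ k"
  proof (cases "k \<ge> 1")
    case True
    then have "nat k = Suc (nat (k - 1))" by simp
    then show ?thesis using True by (simp add: Gm_nth)
  qed (simp add: Gm_nth)
  finally show "((lam1 - inner (lam_ser c)) * Gm c) $$ k = (1 :: 'a fls fls) $$ k" .
qed

lemma Psi_eq: "(outer (z_ser c) - inner fls_X_inv) * Psi c = outer (Dz c)"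
proof (rule slice_eqI)
  fix j
  have zn: "z_ser c \<noteq> 0" by (rule z_nz)
  have L: "slice j ((outer (z_ser c) - inner fls_X_inv) * Psi c) =
      z_ser c * slice j (Psi c) - slice (j + 1) (Psi c)"
    by (simp only: left_diff_distrib slice_diff slice_outer_mult slice_Winv_mult)
  show "slice j ((outer (z_ser c) - inner fls_X_inv) * Psi c) = slice j (outer (Dz c))"
    unfolding L slice_outer slice_Psi
  proof -
    consider "j > 0" | "j = 0" | "j < 0" by linarith
    then show "z_ser c * (if j \<le> 0 then Cm c (nat (- j)) else 0) -
        (if j + 1 \<le> 0 then Cm c (nat (- (j + 1))) else 0) = (if j = 0 then Dz c else 0)"
    proof cases
      case 1 then show ?thesis by simp
    next
      case 2 then show ?thesis using zn by (simp add: Cm_def)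
    next
      case 3
      define m where "m = nat (- (j + 1))"
      have m: "nat (- j) = Suc m" "nat (- (j + 1)) = m" using 3 by (simp_all add: m_def)
      have "z_ser c * Cm c (Suc m) = Dz c * (z_ser c * inverse (z_ser c)) * inverse (z_ser c ^ (m + 1))"
        by (simp add: Cm_def inverse_mult_distrib mult_ac)
      also have "\<dots> = Cm c m" using zn by (simp add: Cm_def)
      finally have "z_ser c * Cm c (Suc m) = Cm c m" .
      then show ?thesis using 3 m by simp
    qed
  qed
qed



lemma Dz_nz: "Dz c \<noteq> 0"
proof
  assume "Dz c = 0"
  then have "Cm c 0 = 0" by (simp add: Cm_def)
  moreover have "Cm c 0 $$ 1 = 1" by (simp add: CL_pos)
  ultimately show False by simp
qed

lemma ZW_nz: "outer (z_ser c) - inner fls_X_inv \<noteq> 0"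
proof
  assume "outer (z_ser c) - inner fls_X_inv = 0"
  then have "outer (Dz c) = 0" using Psi_eq[of c] by simp
  then show False using Dz_nz[of c] fhom_inj[OF fhom_outer] by blast
qed

lemma L_nz: "lam1 - inner (lam_ser c) \<noteq> 0"
  using Gm_inv[of c] by auto

lemma X_X_inv: "(fls_X :: 'a::field fls) * fls_X_inv = 1"
  by (simp add: fls_inverse_X[symmetric])

lemma d_lam1_outer: "d_lam1 (outer f) = outer (- (fls_X ^ 2) * fls_deriv f)"
  by (simp add: d_lam1_def deriv_t_outer fhom_mult[OF fhom_outer] fhom_uminus[OF fhom_outer]
      fhom_power[OF fhom_outer] outer_X)

lemma d_lam1_inner: "d_lam1 (inner g) = 0"
  by (simp add: d_lam1_def)

lemma d_lam1_lam1: "d_lam1 (lam1 :: 'a::field fls fls) = 1"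
proof -
  have "d_lam1 (lam1 :: 'a fls fls) = (fls_X * fls_X_inv) ^ 2"
    by (simp add: d_lam1_def deriv_t_def lam1_def power_mult_distrib)
  then show ?thesis by (simp add: X_X_inv)
qed

lemma part1_sigma:
  "d_lam1 ((outer (z_ser c) - inner fls_X_inv) / (lam1 - inner (lam_ser c))) /
     ((outer (z_ser c) - inner fls_X_inv) / (lam1 - inner (lam_ser c))) = - Nn c"
proof -
  let ?ZW = "outer (z_ser c) - inner fls_X_inv" and ?L = "lam1 - inner (lam_ser c)"
  have 1: "d_lam1 ?ZW = outer (Dz c)"
    by (simp add: der_diff[OF is_der_d_lam1] d_lam1_outer d_lam1_inner Dz_def)
  have 2: "d_lam1 ?L = 1"
    by (simp add: der_diff[OF is_der_d_lam1] d_lam1_lam1 d_lam1_inner)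
  have 3: "outer (Dz c) / ?ZW = Psi c"
    using Psi_eq[of c] ZW_nz[of c] by (simp add: field_simps)
  have 4: "1 / ?L = Gm c"
    using Gm_inv[of c] L_nz[of c] by (simp add: field_simps)
  show ?thesis
    unfolding der_logdiv[OF is_der_d_lam1 ZW_nz L_nz] 1 2 3 4 by (simp add: Psi_def)
qed



definition sig1 :: "(nat \<Rightarrow> 'a::field_char_0) \<Rightarrow> 'a fls \<Rightarrow> 'a fls" where
  "sig1 c g = fls_compose_fps g (lam_inv_ps c)"

definition sig :: "(nat \<Rightarrow> 'a::field_char_0) \<Rightarrow> 'a fls fls \<Rightarrow> 'a fls fls" where
  "sig c = fmap (sig1 c)"

lemma fhom_sig1: "fhom (sig1 c)"
  unfolding fhom_def sig1_def
  by (simp add: fls_compose_fps_add[OF a_nz a0] fls_compose_fps_mult[OF a_nz a0])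

lemma fhom_sig: "fhom (sig c)"
  unfolding sig_def by (rule fhom_fmap[OF fhom_sig1])

lemma sig_outer: "sig c (outer f) = outer f"
  by (rule fls_eqI) (simp add: sig_def fmap_nth'[OF fhom_sig1] outer_nth sig1_def)

lemma sig_inner: "sig c (inner g) = inner (sig1 c g)"
  unfolding sig_def inner_def by (rule fmap_const[OF fhom_sig1])

lemma sig_X: "sig c fls_X = fls_X"
  unfolding sig_def by (rule fmap_X[OF fhom_sig1])
lemma sig_X_inv: "sig c fls_X_inv = fls_X_inv"
  unfolding sig_def by (rule fmap_X_inv[OF fhom_sig1])

lemma sig_d_lam1: "sig c (d_lam1 F) = d_lam1 (sig c F)"
proof -
  have "sig c (deriv_t F) = deriv_t (sig c F)"
    unfolding sig_def deriv_t_def by (rule fmap_deriv[OF fhom_sig1])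
  then show ?thesis
    by (simp add: d_lam1_def fhom_mult[OF fhom_sig] fhom_uminus[OF fhom_sig] fhom_power[OF fhom_sig] sig_X)
qed

lemma negba: "(neg_part c n oo fps_inv (lam_inv_ps c)) oo lam_inv_ps c = neg_part c n"
proof -
  have "(neg_part c n oo fps_inv (lam_inv_ps c)) oo lam_inv_ps c = neg_part c n oo (fps_inv (lam_inv_ps c) oo lam_inv_ps c)"
    by (rule fps_compose_assoc[symmetric]) (simp_all add: a0 b0)
  then show ?thesis by (simp add: ba)
qed

lemma sig_S1: "sig c (S1 c) = Nn c"
proof (rule fls_eqI)
  fix k
  show "sig c (S1 c) $$ k = Nn c $$ k"
  proof (cases "k \<ge> 2")
    case True
    have "S1 c $$ k = fps_to_fls (Abs_fps (\<lambda>m. if m \<ge> 1 then vcoef c (nat k - 1) m / of_nat m else 0))"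
      using True by (simp add: S1_def)
    then have "S1 c $$ k = fps_to_fls (neg_part c (nat k - 1) oo fps_inv (lam_inv_ps c))"
      by (simp only: S1_coef)
    then have "sig c (S1 c) $$ k = fps_to_fls (neg_part c (nat k - 1))"
      by (simp add: sig_def fmap_nth'[OF fhom_sig1] sig1_def fls_compose_fps_to_fls[OF a_nz a0] negba)
    then show ?thesis using True by (simp add: Nn_def)
  next
    case False
    then have "S1 c $$ k = 0" by (auto simp: S1_def)
    moreover have "Nn c $$ k = 0" using False by (auto simp: Nn_def)
    ultimately show ?thesis by (simp add: sig_def fmap_nth'[OF fhom_sig1] fhom_0[OF fhom_sig1])
  qed
qed

lemma sig_z2: "sig c (inner (z_ser c)) = inner fls_X_inv"
proof -
  have "sig1 c (z_ser c) = inverse (fps_to_fls (fps_inv (lam_inv_ps c) oo lam_inv_ps c))"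
    by (simp add: sig1_def z_ser_def fls_compose_fps_inverse[OF a_nz a0] fls_compose_fps_to_fls[OF a_nz a0])
  then have "sig1 c (z_ser c) = fls_X_inv" by (simp add: ba fls_inverse_X)
  then show ?thesis by (simp add: sig_inner)
qed

lemma sig_lam2: "sig c lam2 = inner (lam_ser c)"
proof -
  have "sig1 c fls_X_inv = inverse (sig1 c fls_X)"
    by (simp add: fhom_inverse[OF fhom_sig1] fls_inverse_X[symmetric])
  also have "\<dots> = inverse (fps_to_fls (lam_inv_ps c))" by (simp add: sig1_def)
  also have "\<dots> = lam_ser c" by (simp add: A_eq)
  finally show ?thesis by (simp add: lam2_def sig_inner)
qed

lemma sig_lam1: "sig c lam1 = lam1"
  by (simp add: lam1_def sig_X_inv)

lemma sig_z1: "sig c (outer (z_ser c)) = outer (z_ser c)"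
  by (rule sig_outer)

lemma sig_inj: "sig c x = sig c y \<Longrightarrow> x = y"
  using fhom_inj[OF fhom_sig, of c "x - y"] by (simp add: fhom_diff[OF fhom_sig])

lemma part1:
  "- S1 c = d_lam1 ((outer (z_ser c) - inner (z_ser c)) / (lam1 - lam2)) /
             ((outer (z_ser c) - inner (z_ser c)) / (lam1 - lam2))"
proof (rule sig_inj[of c])
  show "sig c (- S1 c) = sig c (d_lam1 ((outer (z_ser c) - inner (z_ser c)) / (lam1 - lam2)) /
             ((outer (z_ser c) - inner (z_ser c)) / (lam1 - lam2)))"
    by (simp only: fhom_uminus[OF fhom_sig] fhom_divide[OF fhom_sig] fhom_diff[OF fhom_sig] sig_d_lam1
        sig_S1 sig_z1 sig_z2 sig_lam1 sig_lam2 part1_sigma)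
qed



lemma part2_alg:
  fixes D1 D2 :: "'b::field \<Rightarrow> 'b" and p :: nat
  assumes D1: "is_der D1" and D2: "is_der D2" and comm: "\<And>x. D1 (D2 x) = D2 (D1 x)"
    and Zd: "Zd \<noteq> 0" and L: "l1 - l2 \<noteq> 0" and T: "l1 ^ p - l2 ^ p \<noteq> 0"
    and l1: "l1 \<noteq> 0" and l2: "l2 \<noteq> 0" and p: "(of_nat p :: 'b) \<noteq> 0"
    and d11: "D1 l1 = 1" and d12: "D1 l2 = 0" and d21: "D2 l1 = 0" and d22: "D2 l2 = 1"
    and S: "D2 (D1 (Zd / (l1 - l2)) / (Zd / (l1 - l2))) = Sv"
  shows "inverse (of_nat p * l1 ^ (p - 1)) * inverse (of_nat p * l2 ^ (p - 1)) * (Sv + 1 / (l1 - l2) ^ 2)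
           - 1 / (l1 ^ p - l2 ^ p) ^ 2
         = inverse (of_nat p * l1 ^ (p - 1)) *
             D1 (inverse (of_nat p * l2 ^ (p - 1)) * D2 (Zd / (l1 ^ p - l2 ^ p)) / (Zd / (l1 ^ p - l2 ^ p)))"
proof -
  define L where "L = l1 - l2"
  define T where "T = l1 ^ p - l2 ^ p"
  define F where "F = Zd / L"
  define dl1 where "dl1 = inverse (of_nat p * l1 ^ (p - 1))"
  define dl2 where "dl2 = inverse (of_nat p * l2 ^ (p - 1))"
  have Ln: "L \<noteq> 0" and Tn: "T \<noteq> 0" using L T by (simp_all add: L_def T_def)
  have Fn: "F \<noteq> 0" using Zd Ln by (simp add: F_def)
  have H: "Zd / T = F * (L / T)" using Ln by (simp add: F_def)
  have LTn: "L / T \<noteq> 0" using Ln Tn by simp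
  have D1dl2: "D1 dl2 = 0"
    by (simp add: dl2_def der_inverse[OF D1] der_mult[OF D1] der_power[OF D1] der_of_nat[OF D1] d12)
  have D2L: "D2 L = -1" by (simp add: L_def der_diff[OF D2] d21 d22)
  have D1L: "D1 L = 1" by (simp add: L_def der_diff[OF D1] d11 d12)
  have D2T: "D2 T = - (of_nat p * l2 ^ (p - 1))" by (simp add: T_def der_diff[OF D2] der_power[OF D2] d21 d22)
  have D1T: "D1 T = of_nat p * l1 ^ (p - 1)" by (simp add: T_def der_diff[OF D1] der_power[OF D1] d11 d12)
  have e1: "D2 (Zd / T) / (Zd / T) = D2 F / F + D2 L / L - D2 T / T"
    unfolding H der_logmult[OF D2 Fn LTn] der_logdiv[OF D2 Ln Tn] by simp
  have e2: "D1 (D2 F / F) = Sv"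
    using S der_comm_logder[OF D1 D2 comm, of F] by (simp add: F_def L_def)
  have e3: "D1 (D2 L / L) = 1 / L ^ 2"
    unfolding D2L using Ln by (simp add: der_divide[OF D1] der_uminus[OF D1] der_1[OF D1] D1L)
  have e4: "D1 (D2 T / T) = - (of_nat p * l2 ^ (p - 1)) * (- (of_nat p * l1 ^ (p - 1)) / T ^ 2)"
  proof -
    have "D1 (D2 T / T) = D1 (- (of_nat p * l2 ^ (p - 1)) * inverse T)"
      unfolding D2T by (simp add: divide_inverse)
    also have "\<dots> = - (of_nat p * l2 ^ (p - 1)) * (- D1 T / T ^ 2)"
      by (simp add: der_mult[OF D1] der_uminus[OF D1] der_power[OF D1] der_of_nat[OF D1] d12 der_inverse[OF D1])
    finally show ?thesis unfolding D1T .
  qed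
  have RHS: "dl1 * D1 (dl2 * D2 (Zd / T) / (Zd / T)) = dl1 * dl2 * (Sv + 1 / L ^ 2) -
      dl1 * dl2 * (of_nat p * l1 ^ (p - 1)) * (of_nat p * l2 ^ (p - 1)) / T ^ 2"
  proof -
    have "D1 (dl2 * D2 (Zd / T) / (Zd / T)) = D1 (dl2 * (D2 (Zd / T) / (Zd / T)))"
      by (simp only: times_divide_eq_right)
    also have "\<dots> = dl2 * D1 (D2 (Zd / T) / (Zd / T))"
      by (simp only: der_mult[OF D1] D1dl2 mult_zero_left add_0)
    also have "\<dots> = dl2 * (Sv + 1 / L ^ 2 - (of_nat p * l2 ^ (p - 1)) * (of_nat p * l1 ^ (p - 1)) / T ^ 2)"
      unfolding e1 der_diff[OF D1] der_add[OF D1] e2 e3 e4 by (simp add: algebra_simps)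
    finally have X: "D1 (dl2 * D2 (Zd / T) / (Zd / T)) =
        dl2 * (Sv + 1 / L ^ 2 - (of_nat p * l2 ^ (p - 1)) * (of_nat p * l1 ^ (p - 1)) / T ^ 2)" .
    show ?thesis unfolding X by (simp add: algebra_simps)
  qed
  have one: "dl1 * dl2 * (of_nat p * l1 ^ (p - 1)) * (of_nat p * l2 ^ (p - 1)) = 1"
  proof -
    have a: "of_nat p * l1 ^ (p - 1) \<noteq> 0" and b: "of_nat p * l2 ^ (p - 1) \<noteq> 0" using p l1 l2 by simp_all
    have "dl1 * dl2 * (of_nat p * l1 ^ (p - 1)) * (of_nat p * l2 ^ (p - 1)) =
        (dl1 * (of_nat p * l1 ^ (p - 1))) * (dl2 * (of_nat p * l2 ^ (p - 1)))" by (simp only: mult_ac)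
    also have "\<dots> = 1" unfolding dl1_def dl2_def by (simp only: left_inverse[OF a] left_inverse[OF b] mult_1_left)
    finally show ?thesis .
  qed
  have "dl1 * dl2 * (of_nat p * l1 ^ (p - 1)) * (of_nat p * l2 ^ (p - 1)) / T ^ 2 = 1 / T ^ 2"
    unfolding one ..
  then show ?thesis using RHS by (simp add: dl1_def dl2_def L_def T_def)
qed



lemma S2_eq: "d_lam2 (- S1 c) = S2 c"
proof (rule fls_eqI, rule fls_eqI)
  fix k j
  have 0: "d_lam2 (- S1 c) = inner (fls_X ^ 2) * deriv_s (S1 c)"
    by (simp add: d_lam2_def der_uminus[OF is_der_deriv_s] fhom_power[OF fhom_inner])
  show "d_lam2 (- S1 c) $$ k $$ j = S2 c $$ k $$ j"
  proof (cases "k \<ge> 2")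
    case False
    then show ?thesis unfolding 0 by (auto simp: inner_def S1_def S2_def)
  next
    case True
    define n where "n = nat k - 1"
    define G where "G = Abs_fps (\<lambda>m. if m \<ge> 1 then vcoef c n m / of_nat m else (0::'a))"
    have nk: "2 \<le> nat k" using True by simp
    have S1k: "S1 c $$ k = fps_to_fls G" unfolding G_def n_def using True nk by (simp add: S1_def)
    have "d_lam2 (- S1 c) $$ k $$ j = (fls_X ^ 2 * fps_to_fls (fps_deriv G)) $$ j"
      unfolding 0 by (simp add: inner_def S1k fls_deriv_fps_to_fls)
    also have "\<dots> = (if j \<ge> 2 then vcoef c n (nat j - 1) else 0)"
    proof (cases "j \<ge> 2")
      case True
      then have e: "nat (j - 2) + 1 = nat j - 1" by simp
      have "(fls_X ^ 2 * fps_to_fls (fps_deriv G)) $$ j = fps_deriv G $ nat (j - 2)"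
        using True by (simp add: fls_X_power_times_conv_shift)
      also have "\<dots> = of_nat (nat j - 1) * G $ (nat j - 1)" by (simp only: fps_deriv_nth e)
      also have "\<dots> = vcoef c n (nat j - 1)" using True by (simp add: G_def)
      finally show ?thesis using True by simp
    next
      case False
      then show ?thesis by (simp add: fls_X_power_times_conv_shift)
    qed
    also have "\<dots> = S2 c $$ k $$ j" unfolding n_def using True nk by (simp add: S2_def) arith
    finally show ?thesis .
  qed
qed



lemma d_lam2_outer: "d_lam2 (outer f) = 0"
  by (simp add: d_lam2_def)

lemma outer_X_inv: "outer fls_X_inv = fls_X_inv"
  using fmap_X_inv[OF fhom_fls_const] by (simp add: outer_eq)

lemma d_lam2_lam1: "d_lam2 (lam1 :: 'a::field fls fls) = 0"
  using d_lam2_outer[of "fls_X_inv :: 'a fls"] by (simp add: outer_X_inv lam1_def)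

lemma d_lam2_lam2: "d_lam2 (lam2 :: 'a::field fls fls) = 1"
proof -
  have "d_lam2 (lam2 :: 'a fls fls) = inner ((fls_X * fls_X_inv) ^ 2)"
    by (simp add: d_lam2_def lam2_def fhom_power[OF fhom_inner] fhom_mult[OF fhom_inner]
        fhom_uminus[OF fhom_inner] power_mult_distrib)
  then show ?thesis by (simp add: X_X_inv fhom_1[OF fhom_inner])
qed

lemma d_lam1_lam2: "d_lam1 (lam2 :: 'a::field fls fls) = 0"
  by (simp add: lam2_def d_lam1_inner)

theorem theorem6:
  fixes c :: "nat \<Rightarrow> 'a::field_char_0" and p :: nat
  assumes "p \<ge> 2"
  shows
    "(let z1 = outer (z_ser c); z2 = inner (z_ser c);
          F = (z1 - z2) / (lam1 - lam2)
      in - S1 c = d_lam1 F / F)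
   \<and> (let z1 = outer (z_ser c); z2 = inner (z_ser c);
          \<zeta>1 = lam1 ^ p; \<zeta>2 = lam2 ^ p;
          dl1 = inverse (of_nat p * lam1 ^ (p - 1));
          dl2 = inverse (of_nat p * lam2 ^ (p - 1));
          d\<zeta>1 = (\<lambda>G. dl1 * d_lam1 G);
          d\<zeta>2 = (\<lambda>G. dl2 * d_lam2 G);
          H = (z1 - z2) / (\<zeta>1 - \<zeta>2)
      in dl1 * dl2 * (S2 c + 1 / (lam1 - lam2) ^ 2) - 1 / (\<zeta>1 - \<zeta>2) ^ 2
           = d\<zeta>1 (d\<zeta>2 H / H))"
proof -
  let ?Zd = "outer (z_ser c) - inner (z_ser c)"
  have P1: "- S1 c = d_lam1 (?Zd / (lam1 - lam2)) / (?Zd / (lam1 - lam2))"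
    by (rule part1)
  have Zd: "?Zd \<noteq> 0"
  proof
    assume "?Zd = 0"
    then have "sig c ?Zd = 0" by (simp add: fhom_0[OF fhom_sig])
    then show False using ZW_nz[of c] by (simp add: fhom_diff[OF fhom_sig] sig_z1 sig_z2)
  qed
  have L: "(lam1 :: 'a fls fls) - lam2 \<noteq> 0"
  proof
    assume "(lam1 :: 'a fls fls) - lam2 = 0"
    then have "sig c (lam1 - lam2) = 0" by (simp add: fhom_0[OF fhom_sig])
    then show False using L_nz[of c] by (simp add: fhom_diff[OF fhom_sig] sig_lam1 sig_lam2)
  qed
  have T: "(lam1 :: 'a fls fls) ^ p - lam2 ^ p \<noteq> 0"
  proof -
    have "((lam1 :: 'a fls fls) ^ p - lam2 ^ p) $$ (- int p) = 1"
      using assms by (simp add: lam1_def lam2_def inner_def flip: fls_const_power)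
    then show ?thesis by auto
  qed
  have l1: "(lam1 :: 'a fls fls) \<noteq> 0" by (simp add: lam1_def)
  have l2: "(lam2 :: 'a fls fls) \<noteq> 0" by (simp add: lam2_def inner_def)
  have pn: "(of_nat p :: 'a fls fls) \<noteq> 0"
  proof -
    have "(of_nat p :: 'a fls fls) $$ 0 = of_nat p" by (simp add: fls_of_nat)
    moreover have "(of_nat p :: 'a fls) \<noteq> 0" using assms by (simp add: fls_of_nat)
    ultimately show ?thesis by auto
  qed
  have S: "d_lam2 (d_lam1 (?Zd / (lam1 - lam2)) / (?Zd / (lam1 - lam2))) = S2 c"
    unfolding P1[symmetric] by (rule S2_eq)
  note P2 = part2_alg[OF is_der_d_lam1 is_der_d_lam2 d_lam_comm Zd L T l1 l2 pn
      d_lam1_lam1 d_lam1_lam2 d_lam2_lam1 d_lam2_lam2 S]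
  show ?thesis unfolding Let_def using P1 P2 by simp
qed



end
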